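(* For every $A\subseteq[n]$, with $$C_A=\sum_{\{i,j\}\subseteq A}\Gamma_{\{i,j\}}\Gamma_{A\setminus\{i,j\}}-(|A|-2)\sum_{i\in A}\mu_i\,\Gamma_{A\setminus\{i\}}$$ (first sum over the 2-element subsets of $A$), one has $$C_A=\frac{|A|(|A|-3)}{4}\,\Gamma_A .$$
   Context: Fix $n\ge1$ and real parameters $\mu_1,\dots,\mu_n>0$; write $[n]=\{1,\dots,n\}$. For $i\in[n]$, $r_i$ is the reflection $(r_if)(x)=f(x_1,\dots,-x_i,\dots,x_n)$ and $T_i=\partial_{x_i}+\frac{\mu_i}{x_i}(1-r_i)$. $\mathcal{C}\ell_n$ is generated by $e_1,\dots,e_n$ with $e_ie_j+e_je_i=-2\delta_{ij}$, $V$ is a fixed left $\mathcal{C}\ell_n$-module, and operators act on $\mathcal{P}(\mathbb{R}^n)\otimes V$ with $x_i,T_i,r_i$ acting on the polynomial factor and $e_i$ on $V$. For $A\subseteq[n]$: $\underline{D}_A=\sum_{i\in A}e_iT_i$, $\underline{x}_A=\sum_{i\in A}e_ix_i$, $\underline{S}_A=\frac12([\underline{x}_A,\underline{D}_A]-1)$, $\Gamma_A=\underline{S}_A\prod_{i\in A}r_i$ (empty sums $0$, empty products $1$). *)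

theory Defs
  imports Complex_Main
begin

text \<open>Elements of P(R^n) tensor V are represented as V-valued polynomials, i.e. by their
coefficient maps: a multi-index alpha :: nat => nat (only coordinates 1..n used) is mapped
to the V-coefficient of x^alpha.\<close>

type_synonym 'v pol = "(nat \<Rightarrow> nat) \<Rightarrow> 'v"

definition is_pol :: "nat \<Rightarrow> 'v::zero pol \<Rightarrow> bool" where
  "is_pol n F \<longleftrightarrow> finite {\<alpha>. F \<alpha> \<noteq> 0} \<and>
     (\<forall>\<alpha>. F \<alpha> \<noteq> 0 \<longrightarrow> (\<forall>k. k \<notin> {1..n} \<longrightarrow> \<alpha> k = 0))"

definition xop :: "nat \<Rightarrow> 'v::zero pol \<Rightarrow> 'v pol" where
  "xop i F = (\<lambda>\<alpha>. if \<alpha> i = 0 then 0 else F (\<alpha>(i := \<alpha> i - 1)))"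

definition dop :: "nat \<Rightarrow> 'v::real_vector pol \<Rightarrow> 'v pol" where
  "dop i F = (\<lambda>\<alpha>. real (Suc (\<alpha> i)) *\<^sub>R F (\<alpha>(i := Suc (\<alpha> i))))"

definition rop :: "nat \<Rightarrow> 'v::real_vector pol \<Rightarrow> 'v pol" where
  "rop i F = (\<lambda>\<alpha>. ((-1::real) ^ (\<alpha> i)) *\<^sub>R F \<alpha>)"

text \<open>division by x_i (applied only to polynomials divisible by x_i)\<close>
definition divx :: "nat \<Rightarrow> 'v pol \<Rightarrow> 'v pol" where
  "divx i G = (\<lambda>\<alpha>. G (\<alpha>(i := Suc (\<alpha> i))))"

definition Top :: "(nat \<Rightarrow> real) \<Rightarrow> nat \<Rightarrow> 'v::real_vector pol \<Rightarrow> 'v pol" where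
  "Top \<mu> i F = (\<lambda>\<alpha>. dop i F \<alpha> + \<mu> i *\<^sub>R divx i (\<lambda>\<beta>. F \<beta> - rop i F \<beta>) \<alpha>)"

definition cop :: "(nat \<Rightarrow> 'v \<Rightarrow> 'v) \<Rightarrow> nat \<Rightarrow> 'v pol \<Rightarrow> 'v pol" where
  "cop e i F = (\<lambda>\<alpha>. e i (F \<alpha>))"

definition DA :: "(nat \<Rightarrow> 'v \<Rightarrow> 'v) \<Rightarrow> (nat \<Rightarrow> real) \<Rightarrow> nat set \<Rightarrow> 'v::real_vector pol \<Rightarrow> 'v pol" where
  "DA e \<mu> A F = (\<lambda>\<alpha>. \<Sum>i\<in>A. cop e i (Top \<mu> i F) \<alpha>)"

definition XA :: "(nat \<Rightarrow> 'v \<Rightarrow> 'v) \<Rightarrow> nat set \<Rightarrow> 'v::real_vector pol \<Rightarrow> 'v pol" where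
  "XA e A F = (\<lambda>\<alpha>. \<Sum>i\<in>A. cop e i (xop i F) \<alpha>)"

definition SA :: "(nat \<Rightarrow> 'v \<Rightarrow> 'v) \<Rightarrow> (nat \<Rightarrow> real) \<Rightarrow> nat set \<Rightarrow> 'v::real_vector pol \<Rightarrow> 'v pol" where
  "SA e \<mu> A F = (\<lambda>\<alpha>. (1/2::real) *\<^sub>R
      (XA e A (DA e \<mu> A F) \<alpha> - DA e \<mu> A (XA e A F) \<alpha> - F \<alpha>))"

definition rprod :: "nat set \<Rightarrow> 'v::real_vector pol \<Rightarrow> 'v pol" where
  "rprod A F = (\<lambda>\<alpha>. (\<Prod>i\<in>A. (-1::real) ^ (\<alpha> i)) *\<^sub>R F \<alpha>)"

definition GammaA :: "(nat \<Rightarrow> 'v \<Rightarrow> 'v) \<Rightarrow> (nat \<Rightarrow> real) \<Rightarrow> nat set \<Rightarrow> 'v::real_vector pol \<Rightarrow> 'v pol" where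
  "GammaA e \<mu> A F = SA e \<mu> A (rprod A F)"

definition CA :: "(nat \<Rightarrow> 'v \<Rightarrow> 'v) \<Rightarrow> (nat \<Rightarrow> real) \<Rightarrow> nat set \<Rightarrow> 'v::real_vector pol \<Rightarrow> 'v pol" where
  "CA e \<mu> A F = (\<lambda>\<alpha>.
     (\<Sum>P\<in>{P. P \<subseteq> A \<and> card P = 2}. GammaA e \<mu> P (GammaA e \<mu> (A - P) F) \<alpha>)
     - (real (card A) - 2) *\<^sub>R (\<Sum>i\<in>A. \<mu> i *\<^sub>R GammaA e \<mu> (A - {i}) F \<alpha>))"

end

theory Submission
  imports Defs "HOL-Library.Function_Algebras"
begin


instantiation "fun" :: (type, real_vector) real_vector
begin
definition scaleR_fun_def: "c *\<^sub>R f = (\<lambda>x. c *\<^sub>R f x)"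
instance by standard (auto simp: scaleR_fun_def fun_eq_iff scaleR_add_right scaleR_add_left)
end

lemma scaleR_fun_apply[simp]: "(c *\<^sub>R f) x = c *\<^sub>R f x" by (simp add: scaleR_fun_def)
lemma minus_fun_apply'[simp]: "(f - g) x = f x - g x" by simp
lemma sum_fun_apply[simp]: "(\<Sum>i\<in>I. f i) x = (\<Sum>i\<in>I. f i x)"
  by (induction I rule: infinite_finite_induct) auto

lemma lin_xop: "linear (xop i :: 'v::real_vector pol \<Rightarrow> _)"
  by (rule linearI) (auto simp: xop_def fun_eq_iff)
lemma lin_dop: "linear (dop i :: 'v::real_vector pol \<Rightarrow> _)"
  by (rule linearI) (auto simp: dop_def fun_eq_iff scaleR_add_right)
lemma lin_rop: "linear (rop i :: 'v::real_vector pol \<Rightarrow> _)"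
  by (rule linearI) (auto simp: rop_def fun_eq_iff scaleR_add_right)
lemma lin_Top: "linear (Top \<mu> i :: 'v::real_vector pol \<Rightarrow> _)"
  by (rule linearI) (auto simp: Top_def dop_def divx_def rop_def fun_eq_iff algebra_simps)
lemma lin_rprod: "linear (rprod A :: 'v::real_vector pol \<Rightarrow> _)"
  by (rule linearI) (auto simp: rprod_def fun_eq_iff algebra_simps)
lemma lin_cop: "linear (e i) \<Longrightarrow> linear (cop e i)"
  by (rule linearI) (auto simp: cop_def fun_eq_iff linear_add linear_scale)

lemma TX_comm: "Top \<mu> i (xop i F) - xop i (Top \<mu> i F) = F + (2 * \<mu> i) *\<^sub>R rop i F"
proof (rule ext)
  fix \<alpha> :: "nat \<Rightarrow> nat"
  show "(Top \<mu> i (xop i F) - xop i (Top \<mu> i F)) \<alpha> = (F + (2 * \<mu> i) *\<^sub>R rop i F) \<alpha>"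
  proof (cases "\<alpha> i")
    case 0 then show ?thesis
      by (simp add: Top_def xop_def dop_def divx_def rop_def algebra_simps flip: scaleR_add_left)
        (simp add: scaleR_add_left)
  next
    case (Suc k) 
    then have u: "\<alpha>(i := Suc k) = \<alpha>" by auto
    from Suc show ?thesis
      by (simp add: Top_def xop_def dop_def divx_def rop_def u algebra_simps scaleR_2 flip: scaleR_scaleR)
  qed
qed

lemma xop_xop: "xop i (xop j F) = xop j (xop i F)"
  by (cases "i = j") (auto simp: xop_def fun_eq_iff fun_upd_twist)

lemma xop_Top: "i \<noteq> j \<Longrightarrow> xop i (Top \<mu> j F) = Top \<mu> j (xop i F)"
  by (auto simp: xop_def Top_def dop_def divx_def rop_def fun_eq_iff fun_upd_twist)

lemma Top_Top: "i \<noteq> j \<Longrightarrow> Top \<mu> i (Top \<mu> j F) = Top \<mu> j (Top \<mu> i F)"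
  by (auto simp: Top_def dop_def divx_def rop_def fun_eq_iff fun_upd_twist algebra_simps)

lemma rop_xop: "i \<noteq> j \<Longrightarrow> rop i (xop j F) = xop j (rop i F)"
  by (auto simp: xop_def rop_def fun_eq_iff)

lemma rop_Top: "i \<noteq> j \<Longrightarrow> rop i (Top \<mu> j F) = Top \<mu> j (rop i F)"
  by (auto simp: Top_def dop_def divx_def rop_def fun_eq_iff algebra_simps)

lemma rop_rop: "rop i (rop j F) = rop j (rop i F)"
  by (auto simp: rop_def fun_eq_iff)

lemma rop_rop_same: "rop i (rop i F) = F"
  by (auto simp: rop_def fun_eq_iff power_mult_distrib[symmetric])

lemma cop_xop: "linear (e k) \<Longrightarrow> cop e k (xop i F) = xop i (cop e k F)"
  by (auto simp: xop_def cop_def fun_eq_iff linear_0)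

lemma cop_Top: "linear (e k) \<Longrightarrow> cop e k (Top \<mu> i F) = Top \<mu> i (cop e k F)"
  by (auto simp: Top_def dop_def divx_def rop_def cop_def fun_eq_iff linear_add linear_scale linear_diff)

lemma cop_rop: "linear (e k) \<Longrightarrow> cop e k (rop i F) = rop i (cop e k F)"
  by (auto simp: rop_def cop_def fun_eq_iff linear_scale)

lemma cop_rprod: "linear (e k) \<Longrightarrow> cop e k (rprod P F) = rprod P (cop e k F)"
  by (auto simp: rprod_def cop_def fun_eq_iff linear_scale)

lemma rprod_xop: "k \<notin> P \<Longrightarrow> rprod P (xop k F) = xop k (rprod P F)"
  by (auto simp: xop_def rprod_def fun_eq_iff intro!: prod.cong)

lemma prod_upd_notin: "k \<notin> P \<Longrightarrow> (\<Prod>i\<in>P. (-1::real) ^ (if i = k then a else x i)) = (\<Prod>i\<in>P. (- 1) ^ x i)"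
  by (rule prod.cong) auto

lemma rprod_Top: "k \<notin> P \<Longrightarrow> rprod P (Top \<mu> k F) = Top \<mu> k (rprod P F)"
  using prod_upd_notin[of k P] by (auto simp: Top_def dop_def divx_def rop_def rprod_def fun_eq_iff algebra_simps intro!: prod.cong)

lemma rprod_rop: "rprod P (rop k F) = rop k (rprod P F)"
  by (auto simp: rop_def rprod_def fun_eq_iff)

lemma rprod_rprod: "finite P \<Longrightarrow> finite B \<Longrightarrow> P \<inter> B = {} \<Longrightarrow> rprod P (rprod B F) = rprod (P \<union> B) F"
  by (auto simp: rprod_def fun_eq_iff prod.union_disjoint)

lemma rprod_remove: "finite A \<Longrightarrow> i \<in> A \<Longrightarrow> rprod (A - {i}) F = rop i (rprod A F)"
  apply (auto simp: rprod_def rop_def fun_eq_iff)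
  apply (subst prod.remove[of A i], auto simp: power_mult_distrib[symmetric])
  done




definition D3 :: "nat set \<Rightarrow> (nat \<times> nat \<times> nat) set" where
  "D3 A = {(i,j,k). i\<in>A \<and> j\<in>A \<and> k\<in>A \<and> i\<noteq>j \<and> i\<noteq>k \<and> j\<noteq>k}"
definition D4 :: "nat set \<Rightarrow> (nat \<times> nat \<times> nat \<times> nat) set" where
  "D4 A = {(i,j,k,l). i\<in>A \<and> j\<in>A \<and> k\<in>A \<and> l\<in>A \<and> i\<noteq>j \<and> i\<noteq>k \<and> j\<noteq>k \<and> i\<noteq>l \<and> j\<noteq>l \<and> k\<noteq>l}"

lemma N3: "finite A \<Longrightarrow> (\<Sum>i\<in>A. \<Sum>j\<in>A-{i}. \<Sum>k\<in>A-{i}-{j}. f i j k) = (\<Sum>(i,j,k)\<in>D3 A. f i j k)"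
proof -
  assume A: "finite A"
  have "(\<Sum>i\<in>A. \<Sum>j\<in>A-{i}. \<Sum>k\<in>A-{i}-{j}. f i j k) = (\<Sum>i\<in>A. \<Sum>(j,k)\<in>Sigma (A-{i}) (\<lambda>j. A-{i}-{j}). f i j k)"
    using A by (intro sum.cong refl, subst sum.Sigma) auto
  also have "\<dots> = (\<Sum>(i,jk)\<in>Sigma A (\<lambda>i. Sigma (A-{i}) (\<lambda>j. A-{i}-{j})). (case jk of (j,k) \<Rightarrow> f i j k))"
    using A by (subst sum.Sigma) (auto simp: case_prod_beta)
  also have "Sigma A (\<lambda>i. Sigma (A-{i}) (\<lambda>j. A-{i}-{j})) = D3 A" by (auto simp: D3_def)
  finally show ?thesis by (simp add: case_prod_beta)
qed

lemma N4: "finite A \<Longrightarrow> (\<Sum>i\<in>A. \<Sum>j\<in>A-{i}. \<Sum>k\<in>A-{i}-{j}. \<Sum>l\<in>A-{i}-{j}-{k}. f i j k l) = (\<Sum>(i,j,k,l)\<in>D4 A. f i j k l)"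
proof -
  assume A: "finite A"
  have "(\<Sum>i\<in>A. \<Sum>j\<in>A-{i}. \<Sum>k\<in>A-{i}-{j}. \<Sum>l\<in>A-{i}-{j}-{k}. f i j k l)
     = (\<Sum>i\<in>A. \<Sum>j\<in>A-{i}. \<Sum>(k,l)\<in>Sigma (A-{i}-{j}) (\<lambda>k. A-{i}-{j}-{k}). f i j k l)"
    using A by (intro sum.cong refl, subst sum.Sigma) auto
  also have "\<dots> = (\<Sum>i\<in>A. \<Sum>(j,kl)\<in>Sigma (A-{i}) (\<lambda>j. Sigma (A-{i}-{j}) (\<lambda>k. A-{i}-{j}-{k})). (case kl of (k,l) \<Rightarrow> f i j k l))"
    using A by (intro sum.cong refl, subst sum.Sigma) (auto simp: case_prod_beta)
  also have "\<dots> = (\<Sum>(i,jkl)\<in>Sigma A (\<lambda>i. Sigma (A-{i}) (\<lambda>j. Sigma (A-{i}-{j}) (\<lambda>k. A-{i}-{j}-{k}))). (case jkl of (j,k,l) \<Rightarrow> f i j k l))"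
    using A by (subst sum.Sigma) (auto simp: case_prod_beta)
  also have "Sigma A (\<lambda>i. Sigma (A-{i}) (\<lambda>j. Sigma (A-{i}-{j}) (\<lambda>k. A-{i}-{j}-{k}))) = D4 A" by (auto simp: D4_def)
  finally show ?thesis by (simp add: case_prod_beta)
qed

lemma fin_D4: "finite A \<Longrightarrow> finite (D4 A)"
  by (rule finite_subset[of _ "A \<times> A \<times> A \<times> A"]) (auto simp: D4_def)

lemma D4_swap: "(\<Sum>(i,j,k,l)\<in>D4 A. f i j k l) = (\<Sum>(i,j,k,l)\<in>D4 A. f k j i l)"
  by (rule sum.reindex_bij_witness[where i="\<lambda>(i,j,k,l). (k,j,i,l)" and j="\<lambda>(i,j,k,l). (k,j,i,l)"])
     (auto simp: D4_def)



locale cl =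
  fixes e :: "nat \<Rightarrow> 'v::real_vector \<Rightarrow> 'v" and U :: "nat set" and \<mu> :: "nat \<Rightarrow> real"
  assumes lin_e: "i \<in> U \<Longrightarrow> linear (e i)"
  and cliff: "i \<in> U \<Longrightarrow> j \<in> U \<Longrightarrow> e i (e j v) + e j (e i v) = (if i = j then (-2::real) *\<^sub>R v else 0)"
begin

lemma lin_c: "i \<in> U \<Longrightarrow> linear (cop e i)" using lin_cop lin_e by blast

lemma cop_sq: "i \<in> U \<Longrightarrow> cop e i (cop e i F) = - F"
proof (rule ext)
  fix \<alpha> assume i: "i \<in> U"
  have "e i (e i (F \<alpha>)) + e i (e i (F \<alpha>)) = (-2::real) *\<^sub>R F \<alpha>" using cliff[OF i i] by simp
  then have "(1/2::real) *\<^sub>R (e i (e i (F \<alpha>)) + e i (e i (F \<alpha>))) = (1/2::real) *\<^sub>R ((-2::real) *\<^sub>R F \<alpha>)" by simp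
  then have "e i (e i (F \<alpha>)) = - F \<alpha>" by (simp add: scaleR_add_right[symmetric] scaleR_2[symmetric])
  then show "cop e i (cop e i F) \<alpha> = (- F) \<alpha>" by (simp add: cop_def)
qed

lemma cop_anti: "i \<in> U \<Longrightarrow> j \<in> U \<Longrightarrow> i \<noteq> j \<Longrightarrow> cop e j (cop e i F) = - cop e i (cop e j F)"
proof (rule ext)
  fix \<alpha> assume i: "i \<in> U" "j \<in> U" "i \<noteq> j"
  have "e i (e j (F \<alpha>)) + e j (e i (F \<alpha>)) = 0" using cliff[OF i(1,2)] i(3) by simp
  then show "cop e j (cop e i F) \<alpha> = (- cop e i (cop e j F)) \<alpha>" by (simp add: cop_def eq_neg_iff_add_eq_0 add.commute)
qed

definition K where "K i j G = cop e i (cop e j (xop i (Top \<mu> j G)))"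
definition QA where "QA B G = (\<Sum>i\<in>B. \<Sum>j\<in>B-{i}. K i j G)"
definition RA where "RA B G = (\<Sum>i\<in>B. \<mu> i *\<^sub>R rop i G)"

lemma XA_eq: "XA e B H = (\<Sum>i\<in>B. cop e i (xop i H))" by (rule ext) (simp add: XA_def)
lemma DA_eq: "DA e \<mu> B H = (\<Sum>i\<in>B. cop e i (Top \<mu> i H))" by (rule ext) (simp add: DA_def)
lemma SA_def': "SA e \<mu> B G = (1/2::real) *\<^sub>R (XA e B (DA e \<mu> B G) - DA e \<mu> B (XA e B G) - G)"
  by (rule ext) (simp add: SA_def)

lemma SA_eq:
  assumes B: "finite B" "B \<subseteq> U"
  shows "SA e \<mu> B G = QA B G + ((real (card B) - 1)/2) *\<^sub>R G + RA B G"
proof -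
  have X: "XA e B (DA e \<mu> B G) = (\<Sum>i\<in>B. \<Sum>j\<in>B. cop e i (cop e j (xop i (Top \<mu> j G))))"
    unfolding XA_eq DA_eq
  proof (rule sum.cong[OF refl])
    fix i assume i: "i \<in> B"
    have "cop e i (xop i (\<Sum>j\<in>B. cop e j (Top \<mu> j G))) = (\<Sum>j\<in>B. cop e i (xop i (cop e j (Top \<mu> j G))))"
      using i B by (simp add: subset_iff linear_sum[OF lin_xop] linear_sum[OF lin_c])
    also have "\<dots> = (\<Sum>j\<in>B. cop e i (cop e j (xop i (Top \<mu> j G))))"
      using B by (intro sum.cong refl) (simp add: cop_xop lin_e subset_iff)
    finally show "cop e i (xop i (\<Sum>j\<in>B. cop e j (Top \<mu> j G))) = (\<Sum>j\<in>B. cop e i (cop e j (xop i (Top \<mu> j G))))" .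
  qed
  have D: "DA e \<mu> B (XA e B G) = (\<Sum>i\<in>B. \<Sum>j\<in>B. cop e j (cop e i (Top \<mu> j (xop i G))))"
    unfolding XA_eq DA_eq
    apply (subst sum.swap)
  proof (rule sum.cong[OF refl])
    fix j assume j: "j \<in> B"
    have "cop e j (Top \<mu> j (\<Sum>i\<in>B. cop e i (xop i G))) = (\<Sum>i\<in>B. cop e j (Top \<mu> j (cop e i (xop i G))))"
      using j B by (simp add: subset_iff linear_sum[OF lin_Top] linear_sum[OF lin_c])
    also have "\<dots> = (\<Sum>i\<in>B. cop e j (cop e i (Top \<mu> j (xop i G))))"
      using B by (intro sum.cong refl) (simp add: cop_Top lin_e subset_iff)
    finally show "cop e j (Top \<mu> j (\<Sum>i\<in>B. cop e i (xop i G))) = (\<Sum>i\<in>B. cop e j (cop e i (Top \<mu> j (xop i G))))" .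
  qed
  have d: "cop e i (cop e j (xop i (Top \<mu> j G))) - cop e j (cop e i (Top \<mu> j (xop i G)))
      = (if i = j then G + (2 * \<mu> i) *\<^sub>R rop i G else 2 *\<^sub>R K i j G)" if ij: "i \<in> B" "j \<in> B" for i j
  proof (cases "i = j")
    case True
    have l: "linear (cop e i \<circ> cop e i)" using ij B lin_c by (intro linear_compose) auto
    have "cop e i (cop e i (xop i (Top \<mu> i G))) - cop e i (cop e i (Top \<mu> i (xop i G)))
        = cop e i (cop e i (xop i (Top \<mu> i G) - Top \<mu> i (xop i G)))"
      using linear_diff[OF l] by simp
    also have "\<dots> = Top \<mu> i (xop i G) - xop i (Top \<mu> i G)" using ij B by (subst cop_sq) auto
    finally show ?thesis using True TX_comm by simp
  next
    case False
    have "cop e j (cop e i (Top \<mu> j (xop i G))) = - K i j G"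
      using False ij B by (simp add: xop_Top K_def cop_anti[of i j] subset_iff)
    then show ?thesis using False by (simp add: K_def scaleR_2)
  qed
  have "XA e B (DA e \<mu> B G) - DA e \<mu> B (XA e B G) = (\<Sum>i\<in>B. \<Sum>j\<in>B. (if i = j then G + (2 * \<mu> i) *\<^sub>R rop i G else 2 *\<^sub>R K i j G))"
    unfolding X D sum_subtractf[symmetric] by (intro sum.cong refl d)
  also have "\<dots> = (\<Sum>i\<in>B. G + (2 * \<mu> i) *\<^sub>R rop i G + (\<Sum>j\<in>B-{i}. 2 *\<^sub>R K i j G))"
  proof (rule sum.cong[OF refl])
    fix i assume "i \<in> B"
    then show "(\<Sum>j\<in>B. (if i = j then G + (2 * \<mu> i) *\<^sub>R rop i G else 2 *\<^sub>R K i j G)) = G + (2 * \<mu> i) *\<^sub>R rop i G + (\<Sum>j\<in>B-{i}. 2 *\<^sub>R K i j G)"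
      using B by (subst sum.remove[of B i]) (auto intro!: sum.cong)
  qed
  also have "\<dots> = real (card B) *\<^sub>R G + 2 *\<^sub>R RA B G + 2 *\<^sub>R QA B G"
    by (simp add: sum.distrib RA_def QA_def scaleR_sum_right sum_constant_scaleR)
  finally show ?thesis unfolding SA_def'
    by (simp add: algebra_simps diff_divide_distrib scaleR_diff_left)
qed


lemma lin_K: "i \<in> U \<Longrightarrow> j \<in> U \<Longrightarrow> linear (K i j)"
proof -
  assume ij: "i \<in> U" "j \<in> U"
  have "K i j = cop e i \<circ> cop e j \<circ> xop i \<circ> Top \<mu> j" by (auto simp: K_def fun_eq_iff)
  then show ?thesis using ij
    by (simp add: linear_compose lin_c lin_xop lin_Top)
qed

lemma rop_K: "i \<in> U \<Longrightarrow> j \<in> U \<Longrightarrow> k \<noteq> i \<Longrightarrow> k \<noteq> j \<Longrightarrow> rop k (K i j G) = K i j (rop k G)"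
  by (simp add: K_def cop_rop[symmetric] lin_e rop_xop rop_Top)

lemma KK:
  assumes U: "i \<in> U" "j \<in> U" "k \<in> U" "l \<in> U"
    and d: "i \<noteq> j" "i \<noteq> k" "j \<noteq> k" "i \<noteq> l" "j \<noteq> l" "k \<noteq> l"
  shows "K k j (K i l G) = - K i j (K k l G)"
proof -
  define M where "M = xop i (xop k (Top \<mu> j (Top \<mu> l G)))"
  have x1: "xop i (Top \<mu> j (xop k (Top \<mu> l G))) = M"
    unfolding M_def using d by (simp add: xop_Top[symmetric])
  have x2: "xop k (Top \<mu> j (xop i (Top \<mu> l G))) = M"
    unfolding M_def using d by (simp add: xop_Top[symmetric] xop_xop)
  have c1: "K i j (K k l G) = cop e i (cop e j (cop e k (cop e l M)))"
    unfolding K_def using U by (simp add: cop_Top[symmetric] cop_xop[symmetric] lin_e x1)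
  have c2: "K k j (K i l G) = cop e k (cop e j (cop e i (cop e l M)))"
    unfolding K_def using U by (simp add: cop_Top[symmetric] cop_xop[symmetric] lin_e x2)
  define N where "N = cop e l M"
  have neg: "\<And>t H. t \<in> U \<Longrightarrow> cop e t (- H) = - cop e t H" using lin_c linear_neg by blast
  have "cop e k (cop e j (cop e i N)) = - cop e k (cop e i (cop e j N))"
    using U d by (simp add: cop_anti[of i j] neg)
  also have "\<dots> = cop e i (cop e k (cop e j N))"
    using U d by (simp add: cop_anti[of i k] neg)
  also have "\<dots> = - cop e i (cop e j (cop e k N))"
    using U d by (simp add: cop_anti[of j k] neg)
  finally show ?thesis using c1 c2 N_def by simp
qed

lemma SA_comm:
  assumes L: "linear L"
    and c: "\<And>k H. k \<in> B \<Longrightarrow> L (cop e k H) = cop e k (L H)"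
    and x: "\<And>k H. k \<in> B \<Longrightarrow> L (xop k H) = xop k (L H)"
    and t: "\<And>k H. k \<in> B \<Longrightarrow> L (Top \<mu> k H) = Top \<mu> k (L H)"
  shows "L (SA e \<mu> B G) = SA e \<mu> B (L G)"
proof -
  have X: "L (XA e B H) = XA e B (L H)" for H
    unfolding XA_eq by (simp add: linear_sum[OF L] c x)
  have D: "L (DA e \<mu> B H) = DA e \<mu> B (L H)" for H
    unfolding DA_eq by (simp add: linear_sum[OF L] c t)
  show ?thesis unfolding SA_def' by (simp add: linear_scale[OF L] linear_diff[OF L] X D)
qed

lemma Gamma_pair:
  assumes A: "finite A" "A \<subseteq> U" and P: "P \<subseteq> A"
  shows "GammaA e \<mu> P (GammaA e \<mu> (A - P) F) = SA e \<mu> P (SA e \<mu> (A - P) (rprod A F))"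
proof -
  have fP: "finite P" using A P finite_subset by blast
  have "rprod P (SA e \<mu> (A - P) (rprod (A - P) F)) = SA e \<mu> (A - P) (rprod P (rprod (A - P) F))"
    using A by (intro SA_comm lin_rprod) (auto simp: cop_rprod lin_e rprod_xop rprod_Top subset_iff)
  also have "rprod P (rprod (A - P) F) = rprod A F"
    using A P fP by (subst rprod_rprod) (auto simp: Un_absorb1 Un_Diff_cancel)
  finally show ?thesis unfolding GammaA_def by simp
qed

lemma Gamma_rem:
  assumes A: "finite A" "A \<subseteq> U" and i: "i \<in> A"
  shows "GammaA e \<mu> (A - {i}) F = SA e \<mu> (A - {i}) (rop i (rprod A F))"
  unfolding GammaA_def using A i by (simp add: rprod_remove)

lemma SA_pair:
  assumes "i \<in> U" "j \<in> U" "i \<noteq> j"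
  shows "SA e \<mu> {i,j} H = K i j H + K j i H + (1/2::real) *\<^sub>R H + \<mu> i *\<^sub>R rop i H + \<mu> j *\<^sub>R rop j H"
proof -
  have "{i,j} - {i} = {j}" "{i,j} - {j} = {i}" using assms by auto
  then show ?thesis using assms by (subst SA_eq) (auto simp: QA_def RA_def)
qed

end



lemma Sym2: "finite A \<Longrightarrow> (\<Sum>i\<in>A. \<Sum>j\<in>A-{i}. f i j) = (\<Sum>i\<in>A. \<Sum>j\<in>A-{i}. f j i)"
proof -
  assume A: "finite A"
  have "(\<Sum>i\<in>A. \<Sum>j\<in>A-{i}. f i j) = (\<Sum>(i,j)\<in>Sigma A (\<lambda>i. A-{i}). f i j)"
    using A by (subst sum.Sigma) auto
  also have "\<dots> = (\<Sum>(i,j)\<in>Sigma A (\<lambda>i. A-{i}). f j i)"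
    by (rule sum.reindex_bij_witness[where i="\<lambda>(i,j). (j,i)" and j="\<lambda>(i,j). (j,i)"]) auto
  also have "\<dots> = (\<Sum>i\<in>A. \<Sum>j\<in>A-{i}. f j i)"
    using A by (subst sum.Sigma) auto
  finally show ?thesis .
qed

lemma pairs_sum:
  fixes f :: "nat set \<Rightarrow> 'b::real_vector"
  assumes A: "finite A"
  shows "(\<Sum>P\<in>{P. P \<subseteq> A \<and> card P = 2}. f P) = (1/2::real) *\<^sub>R (\<Sum>i\<in>A. \<Sum>j\<in>A-{i}. f {i,j})"
proof -
  define T where "T = {P. P \<subseteq> A \<and> card P = 2}"
  define S where "S = Sigma A (\<lambda>i. A - {i})"
  have fT: "finite T" unfolding T_def by (rule finite_subset[of _ "Pow A"]) (use A in auto)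
  have fS: "finite S" unfolding S_def using A by auto
  have img: "(\<lambda>(i,j). {i,j}) ` S \<subseteq> T" unfolding S_def T_def by auto
  have "(\<Sum>i\<in>A. \<Sum>j\<in>A-{i}. f {i,j}) = (\<Sum>(i,j)\<in>S. f {i,j})"
    unfolding S_def using A by (subst sum.Sigma) auto
  also have "\<dots> = (\<Sum>P\<in>T. sum (\<lambda>(i,j). f {i,j}) {x\<in>S. (\<lambda>(i,j). {i,j}) x = P})"
    using sum.group[OF fS fT img, of "\<lambda>(i,j). f {i,j}"] by simp
  also have "\<dots> = (\<Sum>P\<in>T. 2 *\<^sub>R f P)"
  proof (rule sum.cong[OF refl])
    fix P assume "P \<in> T"
    then obtain u v where P: "P = {u,v}" "u \<noteq> v" "u \<in> A" "v \<in> A"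
      unfolding T_def by (auto simp: card_2_iff)
    have "{x\<in>S. (\<lambda>(i,j). {i,j}) x = P} = {(u,v),(v,u)}"
      using P unfolding S_def by (auto simp: doubleton_eq_iff)
    then show "sum (\<lambda>(i,j). f {i,j}) {x\<in>S. (\<lambda>(i,j). {i,j}) x = P} = 2 *\<^sub>R f P"
      using P by (simp add: insert_commute scaleR_2)
  qed
  finally show ?thesis unfolding T_def by (simp add: scaleR_sum_right)
qed

lemma D3_rot: "(\<Sum>(i,j,k)\<in>D3 A. f i j k) = (\<Sum>(i,j,k)\<in>D3 A. f j k i)"
  by (rule sum.reindex_bij_witness[where j="\<lambda>(i,j,k). (k,i,j)" and i="\<lambda>(i,j,k). (j,k,i)"])
     (auto simp: D3_def)

lemma D3_sw: "(\<Sum>(i,j,k)\<in>D3 A. f i j k) = (\<Sum>(i,j,k)\<in>D3 A. f i k j)"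
  by (rule sum.reindex_bij_witness[where i="\<lambda>(i,j,k). (i,k,j)" and j="\<lambda>(i,j,k). (i,k,j)"])
     (auto simp: D3_def)

lemma D4_pairsw: "(\<Sum>(i,j,k,l)\<in>D4 A. f i j k l) = (\<Sum>(i,j,k,l)\<in>D4 A. f k l i j)"
  by (rule sum.reindex_bij_witness[where i="\<lambda>(i,j,k,l). (k,l,i,j)" and j="\<lambda>(i,j,k,l). (k,l,i,j)"])
     (auto simp: D4_def)

lemma D4_rot: "(\<Sum>(i,j,k,l)\<in>D4 A. f i j k l) = (\<Sum>(i,j,k,l)\<in>D4 A. f i l j k)"
  by (rule sum.reindex_bij_witness[where j="\<lambda>(i,j,k,l). (i,k,l,j)" and i="\<lambda>(i,j,k,l). (i,l,j,k)"])
     (auto simp: D4_def)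

lemma card_m1: "finite B \<Longrightarrow> x \<in> B \<Longrightarrow> real (card (B - {x})) = real (card B) - 1"
proof -
  assume B: "finite B" "x \<in> B"
  then have "card B \<noteq> 0" by auto
  then have "card B \<ge> 1" by linarith
  then show ?thesis using B by (simp add: card_Diff_singleton of_nat_diff)
qed

lemma cnt1:
  fixes c :: "'b::real_vector"
  assumes "finite A" "i \<in> A"
  shows "(\<Sum>j\<in>A-{i}. c) = (real (card A) - 1) *\<^sub>R c"
proof -
  have "real (card (A - {i})) = real (card A) - 1" using card_m1[OF assms(1,2)] .
  then show ?thesis unfolding sum_constant_scaleR by simp
qed

lemma cnt2:
  fixes c :: "'b::real_vector"
  assumes A: "finite A" "i \<in> A" "j \<in> A" "i \<noteq> j"
  shows "(\<Sum>k\<in>A-{i}-{j}. c) = (real (card A) - 2) *\<^sub>R c"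
proof -
  have "real (card (A - {i})) = real (card A) - 1" using card_m1[OF assms(1,2)] .
  moreover have "real (card (A - {i} - {j})) = real (card (A - {i})) - 1" using assms by (intro card_m1) auto
  ultimately show ?thesis unfolding sum_constant_scaleR by simp
qed

lemma cnt3:
  fixes c :: "'b::real_vector"
  assumes A: "finite A" "i \<in> A" "j \<in> A" "k \<in> A" "i \<noteq> j" "i \<noteq> k" "j \<noteq> k"
  shows "(\<Sum>l\<in>A-{i}-{j}-{k}. c) = (real (card A) - 3) *\<^sub>R c"
proof -
  have "real (card (A - {i})) = real (card A) - 1" using card_m1[OF assms(1,2)] .
  moreover have "real (card (A - {i} - {j})) = real (card (A - {i})) - 1" using assms by (intro card_m1) auto
  moreover have "real (card (A - {i} - {j} - {k})) = real (card (A - {i} - {j})) - 1" using assms by (intro card_m1) auto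
  ultimately show ?thesis unfolding sum_constant_scaleR by simp
qed

lemma cnt11:
  fixes c :: "'b::real_vector"
  assumes A: "finite A" "i \<in> A"
  shows "(\<Sum>j\<in>A-{i}. \<Sum>k\<in>A-{i}-{j}. c) = ((real (card A) - 1) * (real (card A) - 2)) *\<^sub>R c"
proof -
  have "(\<Sum>j\<in>A-{i}. \<Sum>k\<in>A-{i}-{j}. c) = (\<Sum>j\<in>A-{i}. (real (card A) - 2) *\<^sub>R c)"
    using A by (intro sum.cong refl) (auto intro: cnt2)
  also have "\<dots> = ((real (card A) - 1) * (real (card A) - 2)) *\<^sub>R c" using A by (simp add: cnt1)
  finally show ?thesis .
qed

lemma cnt22:
  fixes c :: "'b::real_vector"
  assumes A: "finite A" "i \<in> A" "j \<in> A" "i \<noteq> j"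
  shows "(\<Sum>k\<in>A-{i}-{j}. \<Sum>l\<in>A-{i}-{j}-{k}. c) = ((real (card A) - 2) * (real (card A) - 3)) *\<^sub>R c"
proof -
  have "(\<Sum>k\<in>A-{i}-{j}. \<Sum>l\<in>A-{i}-{j}-{k}. c) = (\<Sum>k\<in>A-{i}-{j}. (real (card A) - 3) *\<^sub>R c)"
    using A by (intro sum.cong refl) (auto intro: cnt3)
  also have "\<dots> = ((real (card A) - 2) * (real (card A) - 3)) *\<^sub>R c" using A by (simp add: cnt2)
  finally show ?thesis .
qed




lemma neg_self: "(x::'a::real_vector) = - x \<Longrightarrow> x = 0"
proof -
  assume "x = - x"
  then have "x + x = 0" by (metis add.right_inverse)
  then have "(2::real) *\<^sub>R x = 0" by (simp add: scaleR_2)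
  then show "x = 0" by simp
qed

context cl begin

lemma I1:
  assumes A: "finite A" "A \<subseteq> U"
  shows "(\<Sum>i\<in>A. \<Sum>j\<in>A-{i}. K i j (QA (A-{i}-{j}) G)) = 0"
proof -
  define S where "S = (\<Sum>(i,j,k,l)\<in>D4 A. K i j (K k l G))"
  have 1: "(\<Sum>i\<in>A. \<Sum>j\<in>A-{i}. K i j (QA (A-{i}-{j}) G)) = (\<Sum>i\<in>A. \<Sum>j\<in>A-{i}. \<Sum>k\<in>A-{i}-{j}. \<Sum>l\<in>A-{i}-{j}-{k}. K i j (K k l G))"
    unfolding QA_def using A by (intro sum.cong refl) (auto simp: linear_sum[OF lin_K] subset_iff)
  also have "\<dots> = S" unfolding S_def using A by (simp add: N4)
  finally have 2: "(\<Sum>i\<in>A. \<Sum>j\<in>A-{i}. K i j (QA (A-{i}-{j}) G)) = S" .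
  have "S = (\<Sum>(i,j,k,l)\<in>D4 A. K k j (K i l G))" unfolding S_def by (rule D4_swap)
  also have "\<dots> = (\<Sum>(i,j,k,l)\<in>D4 A. - K i j (K k l G))"
    using A by (intro sum.cong refl) (clarsimp simp: D4_def, rule KK, auto)
  also have "\<dots> = - S" unfolding S_def by (simp add: sum_negf case_prod_beta)
  finally have "S = 0" by (rule neg_self)
  then show ?thesis using 2 by simp
qed

lemma I3:
  assumes A: "finite A" "A \<subseteq> U"
  shows "(\<Sum>i\<in>A. \<Sum>j\<in>A-{i}. K i j (RA (A-{i}-{j}) G)) = (\<Sum>k\<in>A. \<mu> k *\<^sub>R QA (A-{k}) (rop k G))"
proof -
  have "(\<Sum>i\<in>A. \<Sum>j\<in>A-{i}. K i j (RA (A-{i}-{j}) G)) = (\<Sum>i\<in>A. \<Sum>j\<in>A-{i}. \<Sum>k\<in>A-{i}-{j}. \<mu> k *\<^sub>R K i j (rop k G))"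
    unfolding RA_def using A by (intro sum.cong refl) (auto simp: linear_sum[OF lin_K] linear_scale[OF lin_K] subset_iff)
  also have "\<dots> = (\<Sum>(i,j,k)\<in>D3 A. \<mu> k *\<^sub>R K i j (rop k G))" using A by (simp add: N3)
  also have "\<dots> = (\<Sum>(i,j,k)\<in>D3 A. \<mu> i *\<^sub>R K j k (rop i G))" by (rule D3_rot)
  also have "\<dots> = (\<Sum>i\<in>A. \<Sum>j\<in>A-{i}. \<Sum>k\<in>A-{i}-{j}. \<mu> i *\<^sub>R K j k (rop i G))" using A by (simp add: N3)
  also have "\<dots> = (\<Sum>k\<in>A. \<mu> k *\<^sub>R QA (A-{k}) (rop k G))"
    unfolding QA_def by (simp add: scaleR_sum_right)
  finally show ?thesis .
qed

lemma I4:
  assumes A: "finite A" "A \<subseteq> U"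
  shows "(\<Sum>i\<in>A. \<Sum>j\<in>A-{i}. QA (A-{i}-{j}) G) = ((real (card A) - 2) * (real (card A) - 3)) *\<^sub>R QA A G"
proof -
  have "(\<Sum>i\<in>A. \<Sum>j\<in>A-{i}. QA (A-{i}-{j}) G) = (\<Sum>i\<in>A. \<Sum>j\<in>A-{i}. \<Sum>k\<in>A-{i}-{j}. \<Sum>l\<in>A-{i}-{j}-{k}. K k l G)"
    unfolding QA_def by simp
  also have "\<dots> = (\<Sum>(i,j,k,l)\<in>D4 A. K k l G)" using A by (simp add: N4)
  also have "\<dots> = (\<Sum>(i,j,k,l)\<in>D4 A. K i j G)" by (rule D4_pairsw)
  also have "\<dots> = (\<Sum>i\<in>A. \<Sum>j\<in>A-{i}. \<Sum>k\<in>A-{i}-{j}. \<Sum>l\<in>A-{i}-{j}-{k}. K i j G)" using A by (simp add: N4)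
  also have "\<dots> = (\<Sum>i\<in>A. \<Sum>j\<in>A-{i}. ((real (card A) - 2) * (real (card A) - 3)) *\<^sub>R K i j G)"
    using A by (intro sum.cong refl) (auto intro!: cnt22)
  also have "\<dots> = ((real (card A) - 2) * (real (card A) - 3)) *\<^sub>R QA A G"
    unfolding QA_def by (simp add: scaleR_sum_right)
  finally show ?thesis .
qed

lemma I5:
  assumes A: "finite A" "A \<subseteq> U"
  shows "(\<Sum>i\<in>A. \<Sum>j\<in>A-{i}. RA (A-{i}-{j}) G) = ((real (card A) - 1) * (real (card A) - 2)) *\<^sub>R RA A G"
proof -
  have "(\<Sum>i\<in>A. \<Sum>j\<in>A-{i}. RA (A-{i}-{j}) G) = (\<Sum>i\<in>A. \<Sum>j\<in>A-{i}. \<Sum>k\<in>A-{i}-{j}. \<mu> k *\<^sub>R rop k G)"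
    unfolding RA_def by simp
  also have "\<dots> = (\<Sum>(i,j,k)\<in>D3 A. \<mu> k *\<^sub>R rop k G)" using A by (simp add: N3)
  also have "\<dots> = (\<Sum>(i,j,k)\<in>D3 A. \<mu> i *\<^sub>R rop i G)" by (rule D3_rot)
  also have "\<dots> = (\<Sum>i\<in>A. \<Sum>j\<in>A-{i}. \<Sum>k\<in>A-{i}-{j}. \<mu> i *\<^sub>R rop i G)" using A by (simp add: N3)
  also have "\<dots> = (\<Sum>i\<in>A. ((real (card A) - 1) * (real (card A) - 2)) *\<^sub>R (\<mu> i *\<^sub>R rop i G))"
    by (rule sum.cong[OF refl], rule cnt11, use A in auto)
  also have "\<dots> = ((real (card A) - 1) * (real (card A) - 2)) *\<^sub>R RA A G"
    unfolding RA_def by (simp add: scaleR_sum_right)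
  finally show ?thesis .
qed

lemma I6:
  assumes A: "finite A" "A \<subseteq> U"
  shows "(\<Sum>i\<in>A. \<Sum>j\<in>A-{i}. \<mu> i *\<^sub>R rop i (QA (A-{i}-{j}) G)) = (real (card A) - 3) *\<^sub>R (\<Sum>k\<in>A. \<mu> k *\<^sub>R QA (A-{k}) (rop k G))"
proof -
  have "(\<Sum>i\<in>A. \<Sum>j\<in>A-{i}. \<mu> i *\<^sub>R rop i (QA (A-{i}-{j}) G)) = (\<Sum>i\<in>A. \<Sum>j\<in>A-{i}. \<Sum>k\<in>A-{i}-{j}. \<Sum>l\<in>A-{i}-{j}-{k}. \<mu> i *\<^sub>R K k l (rop i G))"
    unfolding QA_def using A
    by (intro sum.cong refl) (auto simp: linear_sum[OF lin_rop] scaleR_sum_right subset_iff rop_K)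
  also have "\<dots> = (\<Sum>(i,j,k,l)\<in>D4 A. \<mu> i *\<^sub>R K k l (rop i G))" using A by (simp add: N4)
  also have "\<dots> = (\<Sum>(i,j,k,l)\<in>D4 A. \<mu> i *\<^sub>R K j k (rop i G))" by (rule D4_rot)
  also have "\<dots> = (\<Sum>i\<in>A. \<Sum>j\<in>A-{i}. \<Sum>k\<in>A-{i}-{j}. \<Sum>l\<in>A-{i}-{j}-{k}. \<mu> i *\<^sub>R K j k (rop i G))" using A by (simp add: N4)
  also have "\<dots> = (\<Sum>i\<in>A. \<Sum>j\<in>A-{i}. \<Sum>k\<in>A-{i}-{j}. (real (card A) - 3) *\<^sub>R (\<mu> i *\<^sub>R K j k (rop i G)))"
    by (rule sum.cong[OF refl], rule sum.cong[OF refl], rule sum.cong[OF refl], rule cnt3, use A in auto)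
  also have "\<dots> = (real (card A) - 3) *\<^sub>R (\<Sum>k\<in>A. \<mu> k *\<^sub>R QA (A-{k}) (rop k G))"
    unfolding QA_def by (simp add: scaleR_sum_right)
  finally show ?thesis .
qed

lemma I8:
  assumes A: "finite A" "A \<subseteq> U"
  shows "(\<Sum>i\<in>A. \<Sum>j\<in>A-{i}. \<mu> i *\<^sub>R rop i (RA (A-{i}-{j}) G)) = (real (card A) - 2) *\<^sub>R (\<Sum>i\<in>A. \<Sum>k\<in>A-{i}. (\<mu> i * \<mu> k) *\<^sub>R rop i (rop k G))"
proof -
  have "(\<Sum>i\<in>A. \<Sum>j\<in>A-{i}. \<mu> i *\<^sub>R rop i (RA (A-{i}-{j}) G)) = (\<Sum>i\<in>A. \<Sum>j\<in>A-{i}. \<Sum>k\<in>A-{i}-{j}. (\<mu> i * \<mu> k) *\<^sub>R rop i (rop k G))"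
    unfolding RA_def
    by (intro sum.cong refl) (simp add: linear_sum[OF lin_rop] linear_scale[OF lin_rop] scaleR_sum_right)
  also have "\<dots> = (\<Sum>(i,j,k)\<in>D3 A. (\<mu> i * \<mu> k) *\<^sub>R rop i (rop k G))" using A by (simp add: N3)
  also have "\<dots> = (\<Sum>(i,j,k)\<in>D3 A. (\<mu> i * \<mu> j) *\<^sub>R rop i (rop j G))" by (rule D3_sw)
  also have "\<dots> = (\<Sum>i\<in>A. \<Sum>j\<in>A-{i}. \<Sum>k\<in>A-{i}-{j}. (\<mu> i * \<mu> j) *\<^sub>R rop i (rop j G))" using A by (simp add: N3)
  also have "\<dots> = (\<Sum>i\<in>A. \<Sum>j\<in>A-{i}. (real (card A) - 2) *\<^sub>R ((\<mu> i * \<mu> j) *\<^sub>R rop i (rop j G)))"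
    by (rule sum.cong[OF refl], rule sum.cong[OF refl], rule cnt2, use A in auto)
  also have "\<dots> = (real (card A) - 2) *\<^sub>R (\<Sum>i\<in>A. \<Sum>k\<in>A-{i}. (\<mu> i * \<mu> k) *\<^sub>R rop i (rop k G))"
    by (simp add: scaleR_sum_right)
  finally show ?thesis .
qed

end



context cl begin

lemma Hexp:
  assumes A: "finite A" "A \<subseteq> U" and ij: "i \<in> A" "j \<in> A" "i \<noteq> j"
  shows "SA e \<mu> (A-{i,j}) G = QA (A-{i}-{j}) G + ((real (card A) - 3)/2) *\<^sub>R G + RA (A-{i}-{j}) G"
proof -
  have s: "A-{i,j} = A-{i}-{j}" by auto
  have c1: "real (card (A-{i})) = real (card A) - 1" using A ij by (intro card_m1) auto
  have c2: "real (card (A-{i}-{j})) = real (card (A-{i})) - 1" using A ij by (intro card_m1) auto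
  have c3: "(real (card (A-{i}-{j})) - 1)/2 = (real (card A) - 3)/2" using c1 c2 by simp
  show ?thesis
    using A SA_eq[of "A-{i}-{j}" G] unfolding c3 s by auto
qed

lemma P4:
  assumes A: "finite A" "A \<subseteq> U"
  shows "(\<Sum>i\<in>A. \<mu> i *\<^sub>R SA e \<mu> (A-{i}) (rop i G)) =
    (\<Sum>k\<in>A. \<mu> k *\<^sub>R QA (A-{k}) (rop k G)) + ((real (card A) - 2)/2) *\<^sub>R RA A G
    + (\<Sum>i\<in>A. \<Sum>k\<in>A-{i}. (\<mu> i * \<mu> k) *\<^sub>R rop i (rop k G))"
proof -
  have e: "\<mu> i *\<^sub>R SA e \<mu> (A-{i}) (rop i G) = \<mu> i *\<^sub>R QA (A-{i}) (rop i G) + ((real (card A) - 2)/2) *\<^sub>R (\<mu> i *\<^sub>R rop i G)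
     + (\<Sum>k\<in>A-{i}. (\<mu> i * \<mu> k) *\<^sub>R rop i (rop k G))" if i: "i \<in> A" for i
  proof -
    have c1: "real (card (A-{i})) = real (card A) - 1" using A i by (intro card_m1) auto
    have c2: "(real (card (A-{i})) - 1)/2 = (real (card A) - 2)/2" using c1 by simp
    have eq1: "SA e \<mu> (A-{i}) (rop i G) = QA (A-{i}) (rop i G) + ((real (card A) - 2)/2) *\<^sub>R rop i G + RA (A-{i}) (rop i G)"
      using A SA_eq[of "A-{i}" "rop i G"] unfolding c2 by auto
    have eq2: "\<mu> i *\<^sub>R RA (A-{i}) (rop i G) = (\<Sum>k\<in>A-{i}. (\<mu> i * \<mu> k) *\<^sub>R rop i (rop k G))"
      unfolding RA_def by (simp add: scaleR_sum_right rop_rop)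
    have "\<mu> i *\<^sub>R SA e \<mu> (A-{i}) (rop i G) = \<mu> i *\<^sub>R QA (A-{i}) (rop i G) + \<mu> i *\<^sub>R (((real (card A) - 2)/2) *\<^sub>R rop i G) + \<mu> i *\<^sub>R RA (A-{i}) (rop i G)"
      by (simp only: eq1 scaleR_add_right)
    then show ?thesis by (simp only: eq2 scaleR_left_commute)
  qed
  have "(\<Sum>i\<in>A. \<mu> i *\<^sub>R SA e \<mu> (A-{i}) (rop i G)) = (\<Sum>i\<in>A. \<mu> i *\<^sub>R QA (A-{i}) (rop i G) + ((real (card A) - 2)/2) *\<^sub>R (\<mu> i *\<^sub>R rop i G)
     + (\<Sum>k\<in>A-{i}. (\<mu> i * \<mu> k) *\<^sub>R rop i (rop k G)))"
    by (rule sum.cong[OF refl]) (rule e)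
  then show ?thesis by (simp add: sum.distrib RA_def scaleR_sum_right)
qed

end



context cl begin

lemma main:
  assumes A: "finite A" "A \<subseteq> U"
  shows "(\<Sum>P\<in>{P. P \<subseteq> A \<and> card P = 2}. SA e \<mu> P (SA e \<mu> (A-P) G))
     - (real (card A) - 2) *\<^sub>R (\<Sum>i\<in>A. \<mu> i *\<^sub>R SA e \<mu> (A-{i}) (rop i G))
     = (real (card A) * (real (card A) - 3) / 4) *\<^sub>R SA e \<mu> A G"
proof -
  define a where "a = real (card A)"
  define Q where "Q = QA A G"
  define R where "R = RA A G"
  define X where "X = (\<Sum>k\<in>A. \<mu> k *\<^sub>R QA (A-{k}) (rop k G))"
  define Y where "Y = (\<Sum>i\<in>A. \<Sum>k\<in>A-{i}. (\<mu> i * \<mu> k) *\<^sub>R rop i (rop k G))"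
  define H where "H i j = SA e \<mu> (A-{i,j}) G" for i j
  define lc where "lc p q r s t = p *\<^sub>R Q + q *\<^sub>R G + r *\<^sub>R R + s *\<^sub>R X + t *\<^sub>R Y" for p q r s t
  have lc_add: "lc p q r s t + lc p' q' r' s' t' = lc (p+p') (q+q') (r+r') (s+s') (t+t')" for p q r s t p' q' r' s' t'
    unfolding lc_def by (simp add: algebra_simps)
  have lc_scale: "c *\<^sub>R lc p q r s t = lc (c*p) (c*q) (c*r) (c*s) (c*t)" for c p q r s t
    unfolding lc_def by (simp add: scaleR_add_right)
  have lc_diff: "lc p q r s t - lc p' q' r' s' t' = lc (p-p') (q-q') (r-r') (s-s') (t-t')" for p q r s t p' q' r' s' t'
    unfolding lc_def by (simp add: algebra_simps)
  have lcc: "lc p q r s t = lc p' q' r' s' t'" if "p=p'" "q=q'" "r=r'" "s=s'" "t=t'" for p q r s t p' q' r' s' t'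
    using that by simp
  have Hsym: "H j i = H i j" for i j unfolding H_def by (simp add: insert_commute)
  have Hx: "H i j = QA (A-{i}-{j}) G + ((a - 3)/2) *\<^sub>R G + RA (A-{i}-{j}) G" if "i \<in> A" "j \<in> A-{i}" for i j
    unfolding H_def a_def using A that by (intro Hexp) auto

  define T1 where "T1 = (\<Sum>i\<in>A. \<Sum>j\<in>A-{i}. K i j (H i j))"
  define T2 where "T2 = (\<Sum>i\<in>A. \<Sum>j\<in>A-{i}. H i j)"
  define T3 where "T3 = (\<Sum>i\<in>A. \<Sum>j\<in>A-{i}. \<mu> i *\<^sub>R rop i (H i j))"

  have S1: "(\<Sum>P\<in>{P. P \<subseteq> A \<and> card P = 2}. SA e \<mu> P (SA e \<mu> (A-P) G)) = (1/2::real) *\<^sub>R (\<Sum>i\<in>A. \<Sum>j\<in>A-{i}. SA e \<mu> {i,j} (H i j))"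
    unfolding H_def by (rule pairs_sum[OF A(1)])
  have S2a: "(\<Sum>i\<in>A. \<Sum>j\<in>A-{i}. SA e \<mu> {i,j} (H i j)) = (\<Sum>i\<in>A. \<Sum>j\<in>A-{i}. K i j (H i j) + K j i (H i j) + (1/2::real) *\<^sub>R H i j + \<mu> i *\<^sub>R rop i (H i j) + \<mu> j *\<^sub>R rop j (H i j))"
    using A by (intro sum.cong refl SA_pair) auto
  have S2b: "(\<Sum>i\<in>A. \<Sum>j\<in>A-{i}. K i j (H i j) + K j i (H i j) + (1/2::real) *\<^sub>R H i j + \<mu> i *\<^sub>R rop i (H i j) + \<mu> j *\<^sub>R rop j (H i j))
     = T1 + (\<Sum>i\<in>A. \<Sum>j\<in>A-{i}. K j i (H i j)) + (1/2::real) *\<^sub>R T2 + T3 + (\<Sum>i\<in>A. \<Sum>j\<in>A-{i}. \<mu> j *\<^sub>R rop j (H i j))"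
    unfolding T1_def T2_def T3_def by (simp only: sum.distrib scaleR_sum_right)
  have S2c: "(\<Sum>i\<in>A. \<Sum>j\<in>A-{i}. K j i (H i j)) = T1"
    unfolding T1_def using Sym2[OF A(1), of "\<lambda>i j. K j i (H i j)"] by (simp add: Hsym)
  have S2d: "(\<Sum>i\<in>A. \<Sum>j\<in>A-{i}. \<mu> j *\<^sub>R rop j (H i j)) = T3"
    unfolding T3_def using Sym2[OF A(1), of "\<lambda>i j. \<mu> j *\<^sub>R rop j (H i j)"] by (simp add: Hsym)
  have LHS1: "(\<Sum>P\<in>{P. P \<subseteq> A \<and> card P = 2}. SA e \<mu> P (SA e \<mu> (A-P) G)) = (1/2::real) *\<^sub>R (T1 + T1 + (1/2::real) *\<^sub>R T2 + T3 + T3)"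
    unfolding S1 S2a S2b S2c S2d ..

  have T1v: "T1 = lc ((a-3)/2) 0 0 1 0"
  proof -
    have "T1 = (\<Sum>i\<in>A. \<Sum>j\<in>A-{i}. K i j (QA (A-{i}-{j}) G) + ((a - 3)/2) *\<^sub>R K i j G + K i j (RA (A-{i}-{j}) G))"
      unfolding T1_def using A
      by (intro sum.cong refl) (auto simp: Hx linear_add[OF lin_K] linear_scale[OF lin_K] subset_iff)
    also have "\<dots> = (\<Sum>i\<in>A. \<Sum>j\<in>A-{i}. K i j (QA (A-{i}-{j}) G)) + ((a - 3)/2) *\<^sub>R (\<Sum>i\<in>A. \<Sum>j\<in>A-{i}. K i j G) + (\<Sum>i\<in>A. \<Sum>j\<in>A-{i}. K i j (RA (A-{i}-{j}) G))"
      by (simp only: sum.distrib scaleR_sum_right)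
    also have "\<dots> = ((a - 3)/2) *\<^sub>R Q + X"
      unfolding I1[OF A] I3[OF A] by (simp add: Q_def X_def QA_def)
    finally show ?thesis unfolding lc_def by simp
  qed
  have T2v: "T2 = lc ((a-2)*(a-3)) (a*(a-1)*(a-3)/2) ((a-1)*(a-2)) 0 0"
  proof -
    have "T2 = (\<Sum>i\<in>A. \<Sum>j\<in>A-{i}. QA (A-{i}-{j}) G + ((a - 3)/2) *\<^sub>R G + RA (A-{i}-{j}) G)"
      unfolding T2_def using A by (intro sum.cong refl) (auto simp: Hx)
    also have "\<dots> = (\<Sum>i\<in>A. \<Sum>j\<in>A-{i}. QA (A-{i}-{j}) G) + (\<Sum>i\<in>A. \<Sum>j\<in>A-{i}. ((a - 3)/2) *\<^sub>R G) + (\<Sum>i\<in>A. \<Sum>j\<in>A-{i}. RA (A-{i}-{j}) G)"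
      by (simp only: sum.distrib)
    also have "(\<Sum>i\<in>A. \<Sum>j\<in>A-{i}. ((a - 3)/2) *\<^sub>R G) = (\<Sum>i\<in>A. (a - 1) *\<^sub>R (((a - 3)/2) *\<^sub>R G))"
      unfolding a_def using A by (intro sum.cong refl cnt1) auto
    also have "\<dots> = (a*(a-1)*(a-3)/2) *\<^sub>R G"
      unfolding a_def by (simp add: sum_constant_scaleR algebra_simps)
    finally show ?thesis unfolding lc_def I4[OF A] I5[OF A] a_def Q_def R_def by (simp add: fun_eq_iff)
  qed
  have T3v: "T3 = lc 0 0 ((a-3)/2*(a-1)) (a-3) (a-2)"
  proof -
    have "T3 = (\<Sum>i\<in>A. \<Sum>j\<in>A-{i}. \<mu> i *\<^sub>R rop i (QA (A-{i}-{j}) G) + ((a - 3)/2) *\<^sub>R (\<mu> i *\<^sub>R rop i G) + \<mu> i *\<^sub>R rop i (RA (A-{i}-{j}) G))"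
      unfolding T3_def using A
      by (intro sum.cong refl) (auto simp: Hx linear_add[OF lin_rop] linear_scale[OF lin_rop] scaleR_add_right scaleR_left_commute)
    also have "\<dots> = (\<Sum>i\<in>A. \<Sum>j\<in>A-{i}. \<mu> i *\<^sub>R rop i (QA (A-{i}-{j}) G)) + (\<Sum>i\<in>A. \<Sum>j\<in>A-{i}. ((a - 3)/2) *\<^sub>R (\<mu> i *\<^sub>R rop i G)) + (\<Sum>i\<in>A. \<Sum>j\<in>A-{i}. \<mu> i *\<^sub>R rop i (RA (A-{i}-{j}) G))"
      by (simp only: sum.distrib)
    also have "(\<Sum>i\<in>A. \<Sum>j\<in>A-{i}. ((a - 3)/2) *\<^sub>R (\<mu> i *\<^sub>R rop i G)) = (\<Sum>i\<in>A. (a - 1) *\<^sub>R (((a - 3)/2) *\<^sub>R (\<mu> i *\<^sub>R rop i G)))"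
      unfolding a_def using A by (intro sum.cong refl cnt1) auto
    also have "\<dots> = ((a-3)/2*(a-1)) *\<^sub>R R"
      unfolding R_def RA_def by (simp add: scaleR_sum_right algebra_simps)
    finally show ?thesis unfolding lc_def I6[OF A] I8[OF A] a_def X_def Y_def by (simp add: fun_eq_iff)
  qed
  have P4v: "(\<Sum>i\<in>A. \<mu> i *\<^sub>R SA e \<mu> (A-{i}) (rop i G)) = lc 0 0 ((a-2)/2) 1 1"
    unfolding P4[OF A] lc_def a_def X_def Y_def R_def by simp
  have SAv: "SA e \<mu> A G = lc 1 ((a-1)/2) 1 0 0"
    unfolding SA_eq[OF A] lc_def a_def Q_def R_def by simp
  have fin: "(1/2::real) *\<^sub>R (T1 + T1 + (1/2::real) *\<^sub>R T2 + T3 + T3) - (a - 2) *\<^sub>R lc 0 0 ((a-2)/2) 1 1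
      = (a * (a - 3) / 4) *\<^sub>R lc 1 ((a-1)/2) 1 0 0"
    unfolding T1v T2v T3v lc_add lc_scale lc_diff
    by (rule lcc) (auto simp: field_simps)
  show ?thesis using fin unfolding LHS1 P4v SAv a_def .
qed

end


theorem lemma12:
  fixes n :: nat and \<mu> :: "nat \<Rightarrow> real" and e :: "nat \<Rightarrow> 'v::real_vector \<Rightarrow> 'v"
    and A :: "nat set" and F :: "'v pol"
  assumes "n \<ge> 1"
    and "\<forall>i\<in>{1..n}. \<mu> i > 0"
    and "\<forall>i\<in>{1..n}. linear (e i)"
    and "\<forall>i\<in>{1..n}. \<forall>j\<in>{1..n}. \<forall>v.
           e i (e j v) + e j (e i v) = (if i = j then (-2::real) *\<^sub>R v else 0)"
    and "A \<subseteq> {1..n}"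
    and "is_pol n F"
  shows "CA e \<mu> A F = (\<lambda>\<alpha>. (real (card A) * (real (card A) - 3) / 4) *\<^sub>R GammaA e \<mu> A F \<alpha>)"
proof -
  interpret cl e "{1..n}" \<mu>
    by (rule cl.intro; use assms(3,4) in blast)
  have A: "finite A" "A \<subseteq> {1..n}" using assms(5) finite_subset by auto
  have CAf: "CA e \<mu> A F = (\<Sum>P\<in>{P. P \<subseteq> A \<and> card P = 2}. GammaA e \<mu> P (GammaA e \<mu> (A-P) F))
      - (real (card A) - 2) *\<^sub>R (\<Sum>i\<in>A. \<mu> i *\<^sub>R GammaA e \<mu> (A-{i}) F)"
    by (rule ext) (simp add: CA_def)
  have g1: "(\<Sum>P\<in>{P. P \<subseteq> A \<and> card P = 2}. GammaA e \<mu> P (GammaA e \<mu> (A-P) F))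
      = (\<Sum>P\<in>{P. P \<subseteq> A \<and> card P = 2}. SA e \<mu> P (SA e \<mu> (A-P) (rprod A F)))"
    by (rule sum.cong[OF refl]) (use A in \<open>auto intro!: Gamma_pair\<close>)
  have g2: "(\<Sum>i\<in>A. \<mu> i *\<^sub>R GammaA e \<mu> (A-{i}) F) = (\<Sum>i\<in>A. \<mu> i *\<^sub>R SA e \<mu> (A-{i}) (rop i (rprod A F)))"
    by (rule sum.cong[OF refl]) (use A in \<open>simp add: Gamma_rem\<close>)
  have "CA e \<mu> A F = (real (card A) * (real (card A) - 3) / 4) *\<^sub>R SA e \<mu> A (rprod A F)"
    unfolding CAf g1 g2 by (rule main[OF A])
  then show ?thesis by (simp add: GammaA_def scaleR_fun_def)
qed

end
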